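(* Let $\mathcal H_s$ be finite-dimensional, $U$ an operator on $\mathcal H_s$, $\mathcal H_d=\mathbb C^2$ with orthonormal basis $\{|\Phi_d\rangle,|\Phi_d^\perp\rangle\}$, $\varrho_d=|\Phi_d\rangle\langle\Phi_d|$, and $h_0=|\Phi_d^\perp\rangle\langle\Phi_d|\otimes U+|\Phi_d\rangle\langle\Phi_d^\perp|\otimes U^\dagger$. Let $\tilde h_{ds}$ be a Hermitian operator on $\mathcal H_d\otimes\mathcal H_s$ with block decomposition (with respect to the detector basis) $\tilde h_{ds}=\begin{pmatrix}A&B^\dagger\\ B&C\end{pmatrix}$, i.e. $A=\langle\Phi_d|\tilde h_{ds}|\Phi_d\rangle$, $B=\langle\Phi_d^\perp|\tilde h_{ds}|\Phi_d\rangle$, $C=\langle\Phi_d^\perp|\tilde h_{ds}|\Phi_d^\perp\rangle$. Let $\gamma>0$, $\tilde\gamma\ge0$, $J=\sqrt{\gamma/\delta t}$, and $\mathcal L_{\delta t}:=-iJ\,\mathrm{ad}(h_0)-\tfrac{\tilde\gamma}{2}\mathrm{ad}^2(\tilde h_{ds})$. Then for every density matrix $\rho$ on $\mathcal H_s$, $$\lim_{\delta t\to0}\frac{\mathrm{Tr}_d\big[e^{\delta t\,\mathcal L_{\delta t}}(\varrho_d\otimes\rho)\big]-\rho}{\delta t}=\gamma\,\mathcal D(U)\rho+\tilde\gamma\,\mathcal D(A)\rho+\tilde\gamma\,\mathcal D(B)\rho .$$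
   Context: $\mathrm{ad}(X)Y=[X,Y]$, $\mathrm{ad}^2(X)Y=[X,[X,Y]]$; $\mathcal D(L)\rho:=L\rho L^\dagger-\tfrac12\{L^\dagger L,\rho\}$; $\mathrm{Tr}_d$ is the partial trace over the detector qubit. *)

theory Defs
  imports "HOL-Analysis.Analysis"
begin

text \<open>The detector space is indexed by the
  two-element type 2, the joint space by 2 \<times> 'n (detector first).\<close>

type_synonym 'n cmat = "complex^'n^'n"

definition cscale :: "complex \<Rightarrow> 'n::finite cmat \<Rightarrow> 'n cmat" where
  "cscale c M = (\<chi> i j. c * M$i$j)"

definition adj :: "complex^'m::finite^'n::finite \<Rightarrow> complex^'n::finite^'m::finite" where
  "adj M = (\<chi> i j. cnj (M$j$i))"

definition hermitian :: "'n::finite cmat \<Rightarrow> bool" where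
  "hermitian M \<longleftrightarrow> adj M = M"

definition orthonormal2 :: "complex^2 \<Rightarrow> complex^2 \<Rightarrow> bool" where
  "orthonormal2 u v \<longleftrightarrow>
     (\<Sum>i\<in>UNIV. cnj (u$i) * u$i) = 1 \<and> (\<Sum>i\<in>UNIV. cnj (v$i) * v$i) = 1 \<and>
     (\<Sum>i\<in>UNIV. cnj (u$i) * v$i) = 0"

definition ketbra :: "complex^'n::finite \<Rightarrow> complex^'n::finite \<Rightarrow> 'n cmat" where
  "ketbra u v = (\<chi> i j. u$i * cnj (v$j))"

definition ctrace :: "'n::finite cmat \<Rightarrow> complex" where
  "ctrace M = (\<Sum>i\<in>UNIV. M$i$i)"

definition density :: "'n::finite cmat \<Rightarrow> bool" where
  "density \<rho> \<longleftrightarrow> hermitian \<rho> \<and> ctrace \<rho> = 1 \<and>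
     (\<forall>v::complex^'n. let q = (\<Sum>i\<in>UNIV. \<Sum>j\<in>UNIV. cnj (v$i) * \<rho>$i$j * v$j)
                       in Im q = 0 \<and> Re q \<ge> 0)"

definition kron :: "'d::finite cmat \<Rightarrow> 'n::finite cmat \<Rightarrow> ('d \<times> 'n) cmat" where
  "kron A B = (\<chi> p q. A$(fst p)$(fst q) * B$(snd p)$(snd q))"

definition ptrace_d :: "('d::finite \<times> 'n::finite) cmat \<Rightarrow> 'n cmat" where
  "ptrace_d M = (\<chi> k l. \<Sum>i\<in>UNIV. M$(i,k)$(i,l))"

definition block :: "complex^'d::finite \<Rightarrow> ('d \<times> 'n::finite) cmat \<Rightarrow> complex^'d \<Rightarrow> 'n cmat" where
  "block u M v = (\<chi> k l. \<Sum>i\<in>UNIV. \<Sum>j\<in>UNIV. cnj (u$i) * M$(i,k)$(j,l) * v$j)"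

definition comm :: "'n::finite cmat \<Rightarrow> 'n cmat \<Rightarrow> 'n cmat" where
  "comm X Y = X ** Y - Y ** X"

definition ad :: "'n::finite cmat \<Rightarrow> 'n cmat \<Rightarrow> 'n cmat" where
  "ad X = comm X"

definition dissipator :: "'n::finite cmat \<Rightarrow> 'n cmat \<Rightarrow> 'n cmat" where
  "dissipator L \<rho> = L ** \<rho> ** adj L
      - cscale (1/2) (adj L ** L ** \<rho> + \<rho> ** (adj L ** L))"

definition sexp :: "real \<Rightarrow> ('n::finite cmat \<Rightarrow> 'n cmat) \<Rightarrow> 'n cmat \<Rightarrow> 'n cmat" where
  "sexp t S X = (\<Sum>k. (t ^ k / fact k) *\<^sub>R (S ^^ k) X)"

end

theory Submission
  imports Defs
begin


lemma funpow_bound: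
  fixes N :: "'a::real_normed_vector \<Rightarrow> 'a"
  assumes "\<And>y. norm (N y) \<le> c * norm y" "c \<ge> 0"
  shows "norm ((N ^^ k) x) \<le> c ^ k * norm x"
proof (induction k)
  case 0 then show ?case by simp
next
  case (Suc k)
  have "norm ((N ^^ Suc k) x) \<le> c * norm ((N ^^ k) x)" using assms by simp
  also have "\<dots> \<le> c * (c ^ k * norm x)"
    using Suc assms(2) by (intro mult_left_mono) auto
  finally show ?case by (simp add: mult.assoc)
qed

lemma expansion:
  fixes P Q :: "'a::banach \<Rightarrow> 'a"
  assumes P: "bounded_linear P" and Q: "bounded_linear Q"
  shows "((\<lambda>s. (1/s^2) *\<^sub>R ((\<Sum>k. (1/fact k) *\<^sub>R ((\<lambda>Y. s *\<^sub>R P Y + s^2 *\<^sub>R Q Y) ^^ k) X) - X - s *\<^sub>R P X))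
          \<longlongrightarrow> Q X + (1/2) *\<^sub>R P (P X)) (at_right 0)"
proof -
  obtain K1 where K1: "K1 > 0" "\<And>x. norm (P x) \<le> norm x * K1"
    using bounded_linear.pos_bounded[OF P] by blast
  obtain K2 where K2: "K2 > 0" "\<And>x. norm (Q x) \<le> norm x * K2"
    using bounded_linear.pos_bounded[OF Q] by blast
  define K where "K = max K1 K2"
  have KP: "norm (P x) \<le> K * norm x" for x
    using K1(2)[of x] unfolding K_def by (smt (verit) mult.commute mult_right_mono norm_ge_zero)
  have KQ: "norm (Q x) \<le> K * norm x" for x
    using K2(2)[of x] unfolding K_def by (smt (verit) mult.commute mult_right_mono norm_ge_zero)
  have Kpos: "K > 0" using K1 unfolding K_def by simp
  define N where "N s = (\<lambda>Y. s *\<^sub>R P Y + s^2 *\<^sub>R Q Y)" for s :: real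
  define c where "c s = K * s + K * s^2" for s :: real
  define f where "f s k = (1/fact k) *\<^sub>R (N s ^^ k) X" for s k
  have Nb: "norm (N s y) \<le> c s * norm y" if "s \<ge> 0" for s y
  proof -
    have "norm (N s y) \<le> norm (s *\<^sub>R P y) + norm (s^2 *\<^sub>R Q y)"
      unfolding N_def by (rule norm_triangle_ineq)
    also have "\<dots> \<le> s * (K * norm y) + s^2 * (K * norm y)"
      using that KP[of y] KQ[of y] by (intro add_mono) (auto intro: mult_left_mono)
    finally show ?thesis unfolding c_def by (simp add: algebra_simps)
  qed
  have fb: "norm (f s k) \<le> c s ^ k / fact k * norm X" if "s \<ge> 0" for s k
    using funpow_bound[of "N s" "c s" k X, OF Nb[OF that]] that Kpos
    unfolding f_def c_def by (simp add: divide_simps)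
  have sumc: "summable (\<lambda>k. c s ^ k / fact k * norm X)" for s
    using summable_mult2[OF summable_exp[of "c s"], of "norm X"]
    by (simp add: field_simps)
  have sumf: "summable (f s)" if "s \<ge> 0" for s
    by (rule summable_comparison_test[OF _ sumc]) (use fb[OF that] in auto)
  define R where "R s = (\<Sum>k. f s (k + 3))" for s
  have Rb: "norm (R s) \<le> c s ^ 3 * exp (c s) * norm X" if "s \<ge> 0" for s
  proof -
    have c0: "c s \<ge> 0" unfolding c_def using Kpos that by simp
    have "norm (R s) \<le> (\<Sum>k. c s ^ 3 * (c s ^ k / fact k * norm X))"
      unfolding R_def
    proof (rule norm_suminf_le)
      fix k
      have "norm (f s (k+3)) \<le> c s ^ (k+3) / fact (k+3) * norm X" by (rule fb[OF that])
      also have "\<dots> \<le> c s ^ (k+3) / fact k * norm X"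
        using c0 by (intro mult_right_mono divide_left_mono) (auto simp: fact_mono)
      finally show "norm (f s (k+3)) \<le> c s ^ 3 * (c s ^ k / fact k * norm X)"
        by (simp add: power_add field_simps)
    next
      show "summable (\<lambda>k. c s ^ 3 * (c s ^ k / fact k * norm X))"
        by (rule summable_mult[OF sumc])
    qed
    also have "\<dots> = c s ^ 3 * exp (c s) * norm X"
    proof -
      have "(\<lambda>k. c s ^ k / fact k) sums exp (c s)"
        using exp_converges[of "c s"] by (simp add: divide_inverse mult.commute)
      hence "(\<lambda>k. c s ^ 3 * (c s ^ k / fact k * norm X)) sums (c s ^ 3 * (exp (c s) * norm X))"
        by (intro sums_mult sums_mult2)
      thus ?thesis by (simp add: sums_iff mult.assoc)
    qed
    finally show ?thesis .
  qed
  have split: "(\<Sum>k. f s k) = X + N s X + (1/2) *\<^sub>R N s (N s X) + R s" if "s \<ge> 0" for s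
  proof -
    have "suminf (f s) = (\<Sum>n. f s (n + 3)) + (\<Sum>i<3. f s i)"
      by (rule suminf_split_initial_segment[OF sumf[OF that]])
    also have "(\<Sum>i<3. f s i) = X + N s X + (1/2) *\<^sub>R N s (N s X)"
      by (simp add: f_def numeral_3_eq_3)
    finally show ?thesis unfolding R_def by simp
  qed
  have linP: "P (a *\<^sub>R x + b *\<^sub>R y) = a *\<^sub>R P x + b *\<^sub>R P y" for a b x y
    using P by (simp add: linear_add linear_scale bounded_linear.linear)
  have linQ: "Q (a *\<^sub>R x + b *\<^sub>R y) = a *\<^sub>R Q x + b *\<^sub>R Q y" for a b x y
    using Q by (simp add: linear_add linear_scale bounded_linear.linear)
  define G where "G s = (1/2) *\<^sub>R (s *\<^sub>R (P (Q X) + Q (P X)) + s^2 *\<^sub>R Q (Q X)) + (1/s^2) *\<^sub>R R s" for s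
  have eq: "(1/s^2) *\<^sub>R ((\<Sum>k. f s k) - X - s *\<^sub>R P X) = Q X + (1/2) *\<^sub>R P (P X) + G s"
    if "s > 0" for s
  proof -
    have "(\<Sum>k. f s k) - X - s *\<^sub>R P X = s^2 *\<^sub>R Q X + (1/2) *\<^sub>R N s (N s X) + R s"
      using split[of s] that by (simp add: N_def)
    also have "N s (N s X) = s^2 *\<^sub>R P (P X) + s^3 *\<^sub>R (P (Q X) + Q (P X)) + s^4 *\<^sub>R Q (Q X)"
      unfolding N_def linP linQ by (simp add: algebra_simps eval_nat_numeral)
    finally show ?thesis using that unfolding G_def
      by (simp add: algebra_simps eval_nat_numeral)
  qed
  have G0: "(G \<longlongrightarrow> 0) (at_right 0)"
  proof -
    have "((\<lambda>s. (1/s^2) *\<^sub>R R s) \<longlongrightarrow> 0) (at_right 0)"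
    proof (rule Lim_null_comparison)
      show "\<forall>\<^sub>F s in at_right 0. norm ((1/s^2) *\<^sub>R R s) \<le> s * (8 * K^3 * exp (2 * K) * norm X)"
      proof -
        have "\<forall>\<^sub>F s in at_right (0::real). s > 0 \<and> s < 1"
          by (simp add: eventually_at_right_less eventually_conj eventually_at_right_field) (meson zero_less_one)
        thus ?thesis
        proof (rule eventually_mono)
          fix s :: real assume s: "0 < s \<and> s < 1"
          have c0: "0 \<le> c s" "c s \<le> 2 * K * s"
            using s Kpos unfolding c_def by (auto simp: power2_eq_square mult_left_le mult_le_cancel_left1)
          have "norm ((1/s^2) *\<^sub>R R s) = norm (R s) / s^2" by simp
          also have "\<dots> \<le> c s ^ 3 * exp (c s) * norm X / s^2"
            using Rb[of s] s by (intro divide_right_mono) auto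
          also have "\<dots> \<le> (2 * K * s)^3 * exp (2 * K) * norm X / s^2"
          proof -
            have "c s ^ 3 \<le> (2 * K * s)^3" using c0 by (intro power_mono) auto
            moreover have "exp (c s) \<le> exp (2 * K)"
              using c0 s Kpos by (smt (verit) exp_le_cancel_iff mult_left_le)
            ultimately show ?thesis using s Kpos c0
              by (intro divide_right_mono mult_right_mono mult_mono) auto
          qed
          also have "\<dots> = s * (8 * K^3 * exp (2 * K) * norm X)"
            using s by (simp add: field_simps eval_nat_numeral)
          finally show "norm ((1/s^2) *\<^sub>R R s) \<le> s * (8 * K^3 * exp (2 * K) * norm X)" .
        qed
      qed
      show "((\<lambda>s. s * (8 * K^3 * exp (2 * K) * norm X)) \<longlongrightarrow> 0) (at_right 0)"
        by (auto intro!: tendsto_eq_intros)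
    qed
    hence "((\<lambda>s. (1/2) *\<^sub>R (s *\<^sub>R (P (Q X) + Q (P X)) + s^2 *\<^sub>R Q (Q X)) + (1/s^2) *\<^sub>R R s) \<longlongrightarrow>
      (1/2) *\<^sub>R ((0::real) *\<^sub>R (P (Q X) + Q (P X)) + (0::real)^2 *\<^sub>R Q (Q X)) + 0) (at_right 0)"
      by (intro tendsto_intros) auto
    thus ?thesis unfolding G_def by simp
  qed
  have "((\<lambda>s. Q X + (1/2) *\<^sub>R P (P X) + G s) \<longlongrightarrow> Q X + (1/2) *\<^sub>R P (P X) + 0) (at_right 0)"
    by (intro tendsto_intros G0)
  hence "((\<lambda>s. Q X + (1/2) *\<^sub>R P (P X) + G s) \<longlongrightarrow> Q X + (1/2) *\<^sub>R P (P X)) (at_right 0)" by simp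
  moreover have "\<forall>\<^sub>F s in at_right 0. Q X + (1/2) *\<^sub>R P (P X) + G s =
      (1/s^2) *\<^sub>R ((\<Sum>k. (1/fact k) *\<^sub>R ((\<lambda>Y. s *\<^sub>R P Y + s^2 *\<^sub>R Q Y) ^^ k) X) - X - s *\<^sub>R P X)"
    using eventually_at_right_less[of 0]
  proof (rule eventually_mono)
    fix s :: real assume "s > 0"
    from eq[OF this] show "Q X + (1/2) *\<^sub>R P (P X) + G s =
      (1/s^2) *\<^sub>R ((\<Sum>k. (1/fact k) *\<^sub>R ((\<lambda>Y. s *\<^sub>R P Y + s^2 *\<^sub>R Q Y) ^^ k) X) - X - s *\<^sub>R P X)"
      unfolding f_def N_def by simp
  qed
  ultimately show ?thesis by (rule tendsto_cong[THEN iffD1, rotated])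
qed



definition Emb :: "complex^'d::finite \<Rightarrow> complex^'n::finite^('d \<times> 'n)" where
  "Emb u = (\<chi> p l. if snd p = l then u$(fst p) else 0)"

lemma sum_pair: "(\<Sum>p\<in>(UNIV::('a::finite\<times>'b::finite) set). g p) = (\<Sum>i\<in>UNIV. \<Sum>m\<in>UNIV. g (i,m))"
  by (simp only: sum.cartesian_product UNIV_Times_UNIV case_prod_beta' prod.collapse)


lemma adjE_E_nth: "(adj (Emb u :: complex^'n::finite^('d::finite \<times> 'n)) ** Emb v)$k$l = 
    (if k = l then (\<Sum>i\<in>UNIV. cnj (u$i) * v$i) else 0)"
proof -
  have "(adj (Emb u :: complex^'n::finite^('d::finite \<times> 'n)) ** Emb v)$k$l = 
    (\<Sum>i\<in>UNIV. \<Sum>m\<in>UNIV. (if m = k then (if m = l then cnj (u$i) * v$i else 0) else 0))"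
    unfolding matrix_matrix_mult_def adj_def Emb_def sum_pair
    by (simp only: vec_lambda_beta fst_conv snd_conv) (intro sum.cong refl, simp)
  also have "\<dots> = (if k = l then (\<Sum>i\<in>UNIV. cnj (u$i) * v$i) else 0)"
    by simp
  finally show ?thesis .
qed

lemma adjE_E: "adj (Emb u :: complex^'n::finite^('d::finite \<times> 'n)) ** Emb v = cscale (\<Sum>i\<in>UNIV. cnj (u$i) * v$i) (mat 1)"
  unfolding vec_eq_iff cscale_def mat_def by (simp add: adjE_E_nth)

lemma kron_E: "kron (ketbra u v) W = Emb u ** W ** adj (Emb v)"
  by (simp add: vec_eq_iff matrix_matrix_mult_def adj_def Emb_def kron_def ketbra_def
       if_distrib if_distribR sum.delta sum.delta' sum_distrib_right cong: if_cong)

lemma block_E: "block u M v = adj (Emb u) ** M ** Emb v"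
  apply (simp add: vec_eq_iff matrix_matrix_mult_def adj_def Emb_def block_def sum_pair
       if_distrib if_distribR sum.delta sum.delta' sum_distrib_right sum_distrib_left cong: if_cong)
  apply (intro allI)
  apply (rule sum.swap)
  done

lemma cnj_if: "cnj (if P then a else b) = (if P then cnj a else cnj b)" by simp
lemma if_mult_l: "(if P then a else b) * (c::complex) = (if P then a * c else b * c)" by simp

lemma complete2:
  assumes "orthonormal2 u v"
  shows "u$i * cnj (u$j) + v$i * cnj (v$j) = (if i = j then 1 else 0)"
proof -
  define W :: "complex^2^2" where "W = (\<chi> i j. if j = 1 then u$i else v$i)"
  have "adj W ** W = mat 1"
  proof -
    have s: "(\<Sum>i\<in>UNIV. cnj (v$i) * u$i) = 0"
    proof -
      have "(\<Sum>i\<in>UNIV. cnj (v$i) * u$i) = cnj (\<Sum>i\<in>UNIV. cnj (u$i) * v$i)" by (simp add: mult.commute)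
      thus ?thesis using assms unfolding orthonormal2_def by simp
    qed
    show ?thesis using assms s unfolding orthonormal2_def
      by (simp add: vec_eq_iff forall_2 matrix_matrix_mult_def adj_def W_def mat_def sum_2)
  qed
  hence "W ** adj W = mat 1" using matrix_left_right_inverse by blast
  hence "(W ** adj W) $ i $ j = mat 1 $ i $ j" by simp
  thus ?thesis by (simp add: matrix_matrix_mult_def adj_def W_def mat_def sum_2)
qed

lemma complete2':
  assumes "orthonormal2 u v"
  shows "cnj (u$i) * u$j + cnj (v$i) * v$j = (if i = j then 1 else 0)"
proof -
  have "cnj (u$i) * u$j + cnj (v$i) * v$j = cnj (u$i * cnj (u$j) + v$i * cnj (v$j))" by simp
  thus ?thesis using complete2[OF assms] by simp
qed

lemma ptrace_E:
  assumes "orthonormal2 u v"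
  shows "ptrace_d M = adj (Emb u) ** M ** Emb u + adj (Emb v) ** M ** Emb v"
proof -
  have "(block u M u + block v M v) $ k $ l = ptrace_d M $ k $ l" for k l
  proof -
    have "(block u M u + block v M v) $ k $ l = 
       (\<Sum>i\<in>UNIV. \<Sum>j\<in>UNIV. (cnj (u$i) * u$j + cnj (v$i) * v$j) * M$(i,k)$(j,l))"
      by (simp add: block_def sum.distrib[symmetric] algebra_simps)
    also have "\<dots> = (\<Sum>i\<in>UNIV. \<Sum>j\<in>UNIV. if i = j then M$(i,k)$(j,l) else 0)"
      by (simp add: complete2'[OF assms] if_mult_l cong: if_cong)
    also have "\<dots> = ptrace_d M $ k $ l" by (simp add: ptrace_d_def)
    finally show ?thesis .
  qed
  thus ?thesis by (simp add: vec_eq_iff block_E)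
qed

lemma ifprod: "(if a = k then x else 0) * (if b = k then y else (0::complex)) = (if k = a then (if a = b then x * y else 0) else 0)"
  by auto

lemma E_adjE:
  assumes "orthonormal2 u v"
  shows "(Emb u :: complex^'n::finite^(2 \<times> 'n)) ** adj (Emb u) + Emb v ** adj (Emb v) = mat 1"
proof -
  have "((Emb u :: complex^'n::finite^(2 \<times> 'n)) ** adj (Emb u) + Emb v ** adj (Emb v)) $ p $ q = mat 1 $ p $ q" for p q
  proof -
    have "((Emb u :: complex^'n::finite^(2 \<times> 'n)) ** adj (Emb u) + Emb v ** adj (Emb v)) $ p $ q =
      (if snd p = snd q then u$fst p * cnj (u$fst q) + v$fst p * cnj (v$fst q) else 0)"
      by (simp add: matrix_matrix_mult_def adj_def Emb_def cnj_if ifprod cong: if_cong)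
    also have "\<dots> = mat 1 $ p $ q" using complete2[OF assms, of "fst p" "fst q"]
      by (cases p, cases q) (auto simp: mat_def)
    finally show ?thesis .
  qed
  thus ?thesis by (simp add: vec_eq_iff)
qed



definition gscale :: "complex \<Rightarrow> complex^'m::finite^'n::finite \<Rightarrow> complex^'m^'n" where
  "gscale c M = (\<chi> i j. c * M$i$j)"

lemma cscale_g: "cscale = gscale" by (simp add: fun_eq_iff cscale_def gscale_def)

lemma mm_add_r: "((A::complex^'m::finite^'n::finite) + B) ** (C::complex^'p::finite^'m) = A ** C + B ** C"
  by (simp add: vec_eq_iff matrix_matrix_mult_def sum.distrib algebra_simps)
lemma mm_diff_r: "((A::complex^'m::finite^'n::finite) - B) ** (C::complex^'p::finite^'m) = A ** C - B ** C"
  by (simp add: vec_eq_iff matrix_matrix_mult_def sum_subtractf algebra_simps)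
lemma mm_diff_l: "(A::complex^'m::finite^'n::finite) ** (B - C) = A ** B - A ** (C::complex^'p::finite^'m)"
  by (simp add: vec_eq_iff matrix_matrix_mult_def sum_subtractf algebra_simps)
lemma mm_gscale_l: "gscale c (A::complex^'m::finite^'n::finite) ** (B::complex^'p::finite^'m) = gscale c (A ** B)"
  by (simp add: vec_eq_iff matrix_matrix_mult_def gscale_def sum_distrib_left algebra_simps)
lemma mm_gscale_r: "(A::complex^'m::finite^'n::finite) ** gscale c (B::complex^'p::finite^'m) = gscale c (A ** B)"
  by (simp add: vec_eq_iff matrix_matrix_mult_def gscale_def sum_distrib_left algebra_simps)
lemma gscale_add: "gscale c (A + B) = gscale c A + gscale c B"
  by (simp add: vec_eq_iff gscale_def algebra_simps)
lemma gscale_diff: "gscale c (A - B) = gscale c A - gscale c B"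
  by (simp add: vec_eq_iff gscale_def algebra_simps)
lemma gscale_gscale: "gscale a (gscale b A) = gscale (a * b) A"
  by (simp add: vec_eq_iff gscale_def algebra_simps)
lemma gscale_zero[simp]: "gscale c 0 = 0"
  by (simp add: vec_eq_iff gscale_def)
lemma scaleR_g: "r *\<^sub>R (M::complex^'m::finite^'n::finite) = gscale (complex_of_real r) M"
  unfolding vec_eq_iff gscale_def by (simp add: scaleR_conv_of_real[where 'a=complex])

lemma adj_mm: "adj ((A::complex^'m::finite^'n::finite) ** (B::complex^'p::finite^'m)) = adj B ** adj A"
  by (simp add: vec_eq_iff matrix_matrix_mult_def adj_def mult.commute)
lemma adj_adj[simp]: "adj (adj A) = A"
  by (simp add: vec_eq_iff adj_def)
lemma adj_add: "adj (A + B) = adj A + adj B"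
  by (simp add: vec_eq_iff adj_def)
lemma adj_diff: "adj (A - B) = adj A - adj B"
  by (simp add: vec_eq_iff adj_def)

lemma mm_neg_l: "(- (A::complex^'m::finite^'n::finite)) ** (B::complex^'p::finite^'m) = - (A ** B)"
  by (simp add: vec_eq_iff matrix_matrix_mult_def sum_negf)
lemma mm_neg_r: "(A::complex^'m::finite^'n::finite) ** (- (B::complex^'p::finite^'m)) = - (A ** B)"
  by (simp add: vec_eq_iff matrix_matrix_mult_def sum_negf)
lemma gscale_neg: "gscale c (- A) = - gscale c A"
  by (simp add: vec_eq_iff gscale_def)
lemma adj_gscale: "adj (gscale c A) = gscale (cnj c) (adj A)"
  by (simp add: vec_eq_iff gscale_def adj_def)

lemma num_g: "numeral k * (A::complex^'m::finite^'n::finite) = gscale (numeral k) A"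
  by (simp add: vec_eq_iff gscale_def)

lemmas malg = num_g mm_neg_l mm_neg_r gscale_neg matrix_mul_assoc matrix_add_ldistrib mm_add_r mm_diff_r mm_diff_l mm_gscale_l mm_gscale_r
  gscale_add gscale_diff gscale_gscale

lemma final_identity:
  fixes U \<rho> :: "complex^'n::finite^'n"
    and \<phi> \<phi>p :: "complex^2"
    and ht :: "complex^(2 \<times> 'n)^(2 \<times> 'n)"
    and \<gamma> \<gamma>t :: real
  assumes onb: "orthonormal2 \<phi> \<phi>p" and herm: "hermitian ht" and g: "\<gamma> > 0"
  assumes e_def: "e = (Emb \<phi> :: complex^'n^(2 \<times> 'n))"
    and f_def: "f = (Emb \<phi>p :: complex^'n^(2 \<times> 'n))"
    and X_def: "X = e ** \<rho> ** adj e"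
    and h0_def: "h0 = f ** U ** adj e + e ** adj U ** adj f"
    and T_def: "T = (\<lambda>Y. adj e ** Y ** e + adj f ** Y ** f)"
    and P_def: "P = (\<lambda>Y. gscale (- \<i> * complex_of_real (sqrt \<gamma>)) (h0 ** Y - Y ** h0))"
    and Q_def: "Q = (\<lambda>Y. - gscale (complex_of_real (\<gamma>t / 2)) (ht ** (ht ** Y - Y ** ht) - (ht ** Y - Y ** ht) ** ht))"
  shows "T X = \<rho>" "T (P X) = 0"
    "T (Q X) + (1/2) *\<^sub>R T (P (P X)) = cscale (complex_of_real \<gamma>) (dissipator U \<rho>)
              + cscale (complex_of_real \<gamma>t) (dissipator (adj e ** ht ** e) \<rho>)
              + cscale (complex_of_real \<gamma>t) (dissipator (adj f ** ht ** e) \<rho>)"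
proof -
  have c0: "(\<Sum>i\<in>UNIV. cnj (\<phi>p $ i) * \<phi> $ i) = cnj (\<Sum>i\<in>UNIV. cnj (\<phi> $ i) * \<phi>p $ i)"
    by (simp add: mult.commute)
  have ee: "adj e ** e = mat 1" "adj f ** f = mat 1" "adj e ** f = 0" "adj f ** e = 0"
    using onb c0 unfolding e_def f_def adjE_E orthonormal2_def cscale_def mat_def
    by (auto simp: vec_eq_iff)
  have ee2: "Z ** adj e ** e = Z" "Z ** adj f ** f = Z" "Z ** adj e ** f = 0" "Z ** adj f ** e = 0" for Z :: "complex^'n^'k::finite"
    by (simp_all add: matrix_mul_assoc[symmetric] ee)
  have compl: "e ** adj e + f ** adj f = mat 1" unfolding e_def f_def by (rule E_adjE[OF onb])
  have hh: "W ** ht ** ht = W ** ht ** e ** adj e ** ht + W ** ht ** f ** adj f ** ht" for W :: "complex^(2\<times>'n)^'k::finite"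
  proof -
    have "W ** ht ** ht = W ** ht ** (e ** adj e + f ** adj f) ** ht" by (simp add: compl)
    thus ?thesis by (simp add: malg)
  qed
  have hadj: "adj ht = ht" using herm unfolding hermitian_def .
  have sg: "complex_of_real (sqrt \<gamma>) * complex_of_real (sqrt \<gamma>) = complex_of_real \<gamma>"
    using g by (simp flip: of_real_mult)
  show "T X = \<rho>" unfolding T_def X_def by (simp add: malg ee ee2)
  show "T (P X) = 0" unfolding T_def X_def P_def h0_def by (simp add: malg ee ee2)
  show "T (Q X) + (1/2) *\<^sub>R T (P (P X)) = cscale (complex_of_real \<gamma>) (dissipator U \<rho>)
              + cscale (complex_of_real \<gamma>t) (dissipator (adj e ** ht ** e) \<rho>)
              + cscale (complex_of_real \<gamma>t) (dissipator (adj f ** ht ** e) \<rho>)"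
    unfolding T_def X_def P_def Q_def h0_def dissipator_def cscale_g scaleR_g
    apply (simp add: malg ee ee2 adj_mm hadj hh)
    apply (simp add: vec_eq_iff gscale_def)
    apply (simp add: algebra_simps sg)
    done
qed



lemma lin_ad: "linear (\<lambda>X::complex^'n::finite^'n. gscale a (H ** X - X ** H))"
  by (rule linearI) (simp_all add: malg scaleR_g, simp_all add: vec_eq_iff gscale_def algebra_simps)

lemma lin_ad2: "linear (\<lambda>X::complex^'n::finite^'n. gscale a (H ** (H ** X - X ** H) - (H ** X - X ** H) ** H))"
  by (rule linearI) (simp_all add: malg scaleR_g, simp_all add: vec_eq_iff gscale_def algebra_simps)

lemma lin_L: "linear (\<lambda>X::complex^'n::finite^'n. cscale a (ad H X) - cscale b (ad H' (ad H' X)))"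
  by (rule linearI) (simp_all add: ad_def comm_def cscale_g malg scaleR_g, simp_all add: vec_eq_iff gscale_def algebra_simps)

lemma lin_Q: "linear (\<lambda>X::complex^'n::finite^'n. - gscale a (H ** (H ** X - X ** H) - (H ** X - X ** H) ** H))"
  by (rule linearI) (simp_all add: malg scaleR_g, simp_all add: vec_eq_iff gscale_def algebra_simps)

lemma lin_ptrace: "linear (ptrace_d :: complex^('d::finite \<times> 'n::finite)^('d \<times> 'n) \<Rightarrow> complex^'n^'n)"
  by (rule linearI) (simp_all add: ptrace_d_def vec_eq_iff sum.distrib scaleR_sum_right)

lemma funpow_scale:
  fixes L :: "'a::real_vector \<Rightarrow> 'a"
  assumes "linear L"
  shows "(c ^ k) *\<^sub>R (L ^^ k) Y = ((\<lambda>Y. c *\<^sub>R L Y) ^^ k) Y"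
proof (induction k)
  case 0 then show ?case by simp
next
  case (Suc k)
  have "((\<lambda>Y. c *\<^sub>R L Y) ^^ Suc k) Y = c *\<^sub>R L (c ^ k *\<^sub>R (L ^^ k) Y)"
    using Suc by simp
  also have "\<dots> = (c ^ Suc k) *\<^sub>R (L ^^ Suc k) Y"
    using assms by (simp add: linear_scale)
  finally show ?case ..
qed

lemma sqrt_at_right: "filterlim sqrt (at_right 0) (at_right (0::real))"
proof -
  have "(sqrt \<longlongrightarrow> sqrt 0) (at_right (0::real))"
    by (intro tendsto_intros)
  moreover have "\<forall>\<^sub>F x in at_right (0::real). sqrt x \<in> {0<..} \<and> sqrt x \<noteq> 0"
    using eventually_at_right_less[of 0] by (rule eventually_mono) simp
  ultimately show ?thesis by (simp add: filterlim_at)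
qed

theorem mainTheorem6:
  fixes U \<rho> :: "complex^'n^'n"
    and \<phi> \<phi>p :: "complex^2"
    and ht :: "complex^(2 \<times> 'n)^(2 \<times> 'n)"
    and \<gamma> \<gamma>t :: real
  assumes onb: "orthonormal2 \<phi> \<phi>p"
    and herm: "hermitian ht"
    and g: "\<gamma> > 0" and gt: "\<gamma>t \<ge> 0"
    and rho: "density \<rho>"
  shows
    "let \<rho>d = ketbra \<phi> \<phi>;
         h0 = kron (ketbra \<phi>p \<phi>) U + kron (ketbra \<phi> \<phi>p) (adj U);
         A = block \<phi> ht \<phi>;
         B = block \<phi>p ht \<phi>;
         J = (\<lambda>dt::real. sqrt (\<gamma> / dt));
         L = (\<lambda>dt X. cscale (- \<i> * complex_of_real (J dt)) (ad h0 X)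
                    - cscale (complex_of_real (\<gamma>t / 2)) (ad ht (ad ht X)))
     in ((\<lambda>dt. (1 / dt) *\<^sub>R (ptrace_d (sexp dt (L dt) (kron \<rho>d \<rho>)) - \<rho>))
          \<longlongrightarrow> cscale (complex_of_real \<gamma>) (dissipator U \<rho>)
              + cscale (complex_of_real \<gamma>t) (dissipator A \<rho>)
              + cscale (complex_of_real \<gamma>t) (dissipator B \<rho>)) (at_right 0)"
proof -
  define X0 where "X0 = kron (ketbra \<phi> \<phi>) \<rho>"
  define h0 where "h0 = kron (ketbra \<phi>p \<phi>) U + kron (ketbra \<phi> \<phi>p) (adj U)"
  define Lf where "Lf = (\<lambda>dt X. cscale (- \<i> * complex_of_real (sqrt (\<gamma> / dt))) (ad h0 X)
                    - cscale (complex_of_real (\<gamma>t / 2)) (ad ht (ad ht X)))"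
  define P where "P = (\<lambda>Y. gscale (- \<i> * complex_of_real (sqrt \<gamma>)) (h0 ** Y - Y ** h0))"
  define Q where "Q = (\<lambda>Y. - gscale (complex_of_real (\<gamma>t / 2)) (ht ** (ht ** Y - Y ** ht) - (ht ** Y - Y ** ht) ** ht))"
  define target where "target = cscale (complex_of_real \<gamma>) (dissipator U \<rho>)
              + cscale (complex_of_real \<gamma>t) (dissipator (block \<phi> ht \<phi>) \<rho>)
              + cscale (complex_of_real \<gamma>t) (dissipator (block \<phi>p ht \<phi>) \<rho>)"
  define F where "F s = (1/s^2) *\<^sub>R ((\<Sum>k. (1/fact k) *\<^sub>R ((\<lambda>Y. s *\<^sub>R P Y + s^2 *\<^sub>R Q Y) ^^ k) X0) - X0 - s *\<^sub>R P X0)" for s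
  have X0e: "X0 = Emb \<phi> ** \<rho> ** adj (Emb \<phi>)" unfolding X0_def by (rule kron_E)
  have h0e: "h0 = Emb \<phi>p ** U ** adj (Emb \<phi>) + Emb \<phi> ** adj U ** adj (Emb \<phi>p)"
    unfolding h0_def kron_E ..
  have Te: "ptrace_d = (\<lambda>Y. adj (Emb \<phi>) ** Y ** Emb \<phi> + adj (Emb \<phi>p) ** Y ** Emb \<phi>p)"
    by (rule ext, rule ptrace_E[OF onb])
  note FI = final_identity[OF onb herm g refl refl X0e h0e Te P_def Q_def]
  have P_h0: "P = (\<lambda>Y. gscale (- \<i> * complex_of_real (sqrt \<gamma>)) (h0 ** Y - Y ** h0))" by (rule P_def)
  have blP: "bounded_linear P" unfolding P_def linear_conv_bounded_linear[symmetric] by (rule lin_ad)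
  have blQ: "bounded_linear Q" unfolding Q_def linear_conv_bounded_linear[symmetric] by (rule lin_Q)
  have blT: "bounded_linear (ptrace_d :: complex^(2 \<times> 'n)^(2 \<times> 'n) \<Rightarrow> complex^'n^'n)"
    unfolding linear_conv_bounded_linear[symmetric] by (rule lin_ptrace)
  have lim_target: "ptrace_d (Q X0 + (1/2) *\<^sub>R P (P X0)) = target"
  proof -
    have "ptrace_d (Q X0 + (1/2) *\<^sub>R P (P X0)) = ptrace_d (Q X0) + (1/2) *\<^sub>R ptrace_d (P (P X0))"
      by (simp add: linear_add[OF lin_ptrace] linear_scale[OF lin_ptrace])
    also have "\<dots> = target"
      using FI(3) unfolding target_def block_E Te by simp
    finally show ?thesis .
  qed
  have limF: "((\<lambda>s. ptrace_d (F s)) \<longlongrightarrow> target) (at_right 0)"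
    unfolding lim_target[symmetric] F_def
    by (rule bounded_linear.tendsto[OF blT expansion[OF blP blQ]])
  have TX0: "ptrace_d X0 = \<rho>" by (rule FI(1))
  have TPX0: "ptrace_d (P X0) = 0" by (rule FI(2))
  have key: "(1/s^2) *\<^sub>R (ptrace_d (sexp (s^2) (Lf (s^2)) X0) - \<rho>) = ptrace_d (F s)" if s: "s > 0" for s
  proof -
    have sq: "sqrt (\<gamma> / s^2) = sqrt \<gamma> / s" using s by (simp add: real_sqrt_divide)
    have Neq: "(\<lambda>Y. s^2 *\<^sub>R Lf (s^2) Y) = (\<lambda>Y. s *\<^sub>R P Y + s^2 *\<^sub>R Q Y)"
    proof
      fix Y
      show "s^2 *\<^sub>R Lf (s^2) Y = s *\<^sub>R P Y + s^2 *\<^sub>R Q Y"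
        unfolding Lf_def P_def Q_def ad_def comm_def cscale_g scaleR_g sq
        apply (simp add: gscale_gscale gscale_diff gscale_neg)
        apply (simp add: vec_eq_iff gscale_def)
        using s apply (simp add: field_simps power2_eq_square)
        done
    qed
    have linL: "linear (Lf (s^2))" unfolding Lf_def by (rule lin_L)
    have Seq: "sexp (s^2) (Lf (s^2)) X0 = (\<Sum>k. (1/fact k) *\<^sub>R ((\<lambda>Y. s *\<^sub>R P Y + s^2 *\<^sub>R Q Y) ^^ k) X0)"
      unfolding sexp_def Neq[symmetric]
    proof (rule suminf_cong)
      fix k
      have "((s^2) ^ k / fact k) *\<^sub>R (Lf (s^2) ^^ k) X0 = (1/fact k) *\<^sub>R ((s^2) ^ k *\<^sub>R (Lf (s^2) ^^ k) X0)"
        by simp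
      also have "\<dots> = (1/fact k) *\<^sub>R ((\<lambda>Y. s^2 *\<^sub>R Lf (s^2) Y) ^^ k) X0"
        by (simp only: funpow_scale[OF linL])
      finally show "((s^2) ^ k / fact k) *\<^sub>R (Lf (s^2) ^^ k) X0 = (1/fact k) *\<^sub>R ((\<lambda>Y. s^2 *\<^sub>R Lf (s^2) Y) ^^ k) X0" .
    qed
    show ?thesis unfolding F_def Seq
      by (simp add: linear_diff[OF lin_ptrace] linear_scale[OF lin_ptrace] TX0 TPX0)
  qed
  have "((\<lambda>dt. (1 / dt) *\<^sub>R (ptrace_d (sexp dt (Lf dt) X0) - \<rho>)) \<longlongrightarrow> target) (at_right 0)"
  proof -
    have "((\<lambda>dt. ptrace_d (F (sqrt dt))) \<longlongrightarrow> target) (at_right 0)"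
      by (rule filterlim_compose[OF limF sqrt_at_right])
    moreover have "\<forall>\<^sub>F dt in at_right 0. ptrace_d (F (sqrt dt)) = (1 / dt) *\<^sub>R (ptrace_d (sexp dt (Lf dt) X0) - \<rho>)"
      using eventually_at_right_less[of 0]
    proof (rule eventually_mono)
      fix dt :: real assume "dt > 0"
      thus "ptrace_d (F (sqrt dt)) = (1 / dt) *\<^sub>R (ptrace_d (sexp dt (Lf dt) X0) - \<rho>)"
        using key[of "sqrt dt"] by simp
    qed
    ultimately show ?thesis by (rule tendsto_cong[THEN iffD1, rotated])
  qed
  thus ?thesis unfolding Let_def X0_def h0_def Lf_def target_def .
qed

end
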